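(* Consider the equation $x'(t)+p(t)\,x(\tau(t))=0$, $t\ge t_0$, where $p,\tau:[t_0,\infty)\to[0,\infty)$ are continuous, $\tau(t)\le t$ and $\lim_{t\to\infty}\tau(t)=\infty$. Assume $\liminf_{t\to\infty}\int_{\tau(t)}^{t}p(s)\,ds=\beta\in(0,1/e]$ and let $\lambda^{*}$ be the smallest real root of $e^{\beta\lambda}=\lambda$. Let $\sigma:[t_0,\infty)\to\mathbb{R}$ be continuous and non-decreasing with $\tau(t)\le\sigma(t)\le t$ for $t\ge t_0$. If $$\limsup_{\varepsilon\to0+}\Bigg(\limsup_{t\to+\infty}\int_{\sigma(t)}^{t}p(s)\exp\bigg(\int_{\tau(s)}^{\sigma(t)}(\lambda^{*}-\varepsilon)\,p(\xi)\,d\xi\bigg)ds\Bigg)>1,$$ then all solutions of this equation oscillate.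
   Context: A solution is a function $x\in C([T_0,\infty);\mathbb{R})$ for some $T_0\ge t_0$, continuously differentiable on $[\tau_{(-1)}(T_0),\infty)$ where $\tau_{(-1)}(t)=\sup\{s:\tau(s)\le t\}$, satisfying the equation for $t\ge\tau_{(-1)}(T_0)$. It is oscillatory if it has arbitrarily large zeros; "all solutions oscillate" means every solution is oscillatory. *)

theory Defs
  imports "HOL-Analysis.Analysis"
begin

definition oint :: "real \<Rightarrow> real \<Rightarrow> (real \<Rightarrow> real) \<Rightarrow> real" where
  "oint a b f = (if a \<le> b then integral {a..b} f else - integral {b..a} f)"

definition tau_inv :: "(real \<Rightarrow> real) \<Rightarrow> real \<Rightarrow> real \<Rightarrow> real" where
  "tau_inv \<tau> t0 T = Sup {s. t0 \<le> s \<and> \<tau> s \<le> T}"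

definition is_solution ::
  "(real \<Rightarrow> real) \<Rightarrow> (real \<Rightarrow> real) \<Rightarrow> real \<Rightarrow> (real \<Rightarrow> real) \<Rightarrow> bool" where
  "is_solution p \<tau> t0 x \<longleftrightarrow>
     (\<exists>T0 x'. t0 \<le> T0 \<and> continuous_on {T0..} x \<and>
        continuous_on {tau_inv \<tau> t0 T0..} x' \<and>
        (\<forall>t \<ge> tau_inv \<tau> t0 T0.
            (x has_real_derivative x' t) (at t within {tau_inv \<tau> t0 T0..}) \<and>
            x' t + p t * x (\<tau> t) = 0))"

definition oscillatory :: "(real \<Rightarrow> real) \<Rightarrow> bool" where
  "oscillatory x \<longleftrightarrow> (\<forall>T. \<exists>t \<ge> T. x t = 0)"

end

theory Submission
  imports Defs
begin

lemma core:
  fixes p \<tau> \<sigma> x x' :: "real \<Rightarrow> real" and t0 \<beta> lam Ti T :: real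
  assumes p_cont: "continuous_on {t0..} p"
      and p_nonneg: "\<And>t. t \<ge> t0 \<Longrightarrow> p t \<ge> 0"
      and tau_le: "\<And>t. t \<ge> t0 \<Longrightarrow> \<tau> t \<le> t"
      and tau_lim: "filterlim \<tau> at_top at_top"
      and beta: "Liminf at_top (\<lambda>t. ereal (integral {\<tau> t..t} p)) = ereal \<beta>"
      and beta_pos: "0 < \<beta>"
      and lam_least: "\<And>l. exp (\<beta> * l) = l \<Longrightarrow> lam \<le> l"
      and sigma_mono: "mono_on {t0..} \<sigma>"
      and sigma_ge: "\<And>t. t \<ge> t0 \<Longrightarrow> \<tau> t \<le> \<sigma> t"
      and sigma_le: "\<And>t. t \<ge> t0 \<Longrightarrow> \<sigma> t \<le> t"
      and cond: "Limsup (at_right 0) (\<lambda>\<epsilon>. Limsup at_top (\<lambda>t. ereal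
                   (integral {\<sigma> t..t} (\<lambda>s. p s *
                      exp (oint (\<tau> s) (\<sigma> t) (\<lambda>\<xi>. (lam - \<epsilon>) * p \<xi>)))))) > 1"
      and deriv: "\<And>t. t \<ge> Ti \<Longrightarrow> (x has_real_derivative x' t) (at t within {Ti..})"
      and eq: "\<And>t. t \<ge> Ti \<Longrightarrow> x' t + p t * x (\<tau> t) = 0"
      and pos: "\<And>t. t \<ge> T \<Longrightarrow> x t > 0"
  shows False
proof -
  define M where "M = max T (max Ti t0)"
  have tau_ev: "\<exists>N. \<forall>t\<ge>N. B \<le> \<tau> t" for B
  proof -
    have "eventually (\<lambda>t. B \<le> \<tau> t) at_top"
      using tau_lim by (simp add: filterlim_at_top)
    then show ?thesis by (simp add: eventually_at_top_linorder)
  qed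
  have pint: "p integrable_on {u..v}" if "t0 \<le> u" for u v
    by (rule integrable_continuous_interval, rule continuous_on_subset[OF p_cont]) (use that in auto)
  have ratio: "x v * exp (a * integral {u..v} p) \<le> x u"
    if NM: "N \<ge> M" and hN: "\<forall>r\<ge>N. a * x r \<le> x (\<tau> r)" and uN: "N \<le> u" and uv: "u \<le> v" for a N u v
  proof -
    have dl: "((\<lambda>r. ln (x r)) has_vector_derivative (- (p r * x (\<tau> r) / x r))) (at r within {u..v})"
      if r: "r \<in> {u..v}" for r
    proof -
      have rM: "r \<ge> M" using r NM uN by auto
      have xr: "x r > 0" using pos rM by (simp add: M_def)
      have d1: "(x has_real_derivative x' r) (at r within {u..v})"
        by (rule DERIV_subset[OF deriv]) (use rM NM uN in \<open>auto simp: M_def\<close>)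
      have "((\<lambda>r. ln (x r)) has_real_derivative (1 / x r * x' r)) (at r within {u..v})"
        by (rule DERIV_chain2[OF DERIV_ln_divide[OF xr] d1])
      moreover have "1 / x r * x' r = - (p r * x (\<tau> r) / x r)"
      proof -
        have "x' r = - (p r * x (\<tau> r))" using eq[of r] rM by (simp add: M_def eq_neg_iff_add_eq_0)
        then show ?thesis by simp
      qed
      ultimately show ?thesis by (simp add: has_real_derivative_iff_has_vector_derivative)
    qed
    have I1: "((\<lambda>r. - (p r * x (\<tau> r) / x r)) has_integral ln (x v) - ln (x u)) {u..v}"
      by (rule fundamental_theorem_of_calculus[OF uv dl])
    have I2: "((\<lambda>r. - (a * p r)) has_integral - (a * integral {u..v} p)) {u..v}"
      using pint[of u v] NM uN
      by (intro has_integral_neg has_integral_mult_right) (auto simp: M_def)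
    have "ln (x v) - ln (x u) \<le> - (a * integral {u..v} p)"
    proof (rule has_integral_le[OF I1 I2])
      fix r assume r: "r \<in> {u..v}"
      have rM: "r \<ge> M" "r \<ge> N" using r NM uN by auto
      have xr: "x r > 0" using pos rM by (simp add: M_def)
      have pr: "p r \<ge> 0" using p_nonneg rM by (simp add: M_def)
      have "p r * (a * x r) \<le> p r * x (\<tau> r)" using hN rM pr by (simp add: mult_left_mono)
      then have "a * p r \<le> p r * x (\<tau> r) / x r" using xr by (simp add: field_simps)
      then show "- (p r * x (\<tau> r) / x r) \<le> - (a * p r)" by simp
    qed
    then have "exp (ln (x v) + a * integral {u..v} p) \<le> exp (ln (x u))" by simp
    moreover have "x v > 0" "x u > 0" using pos NM uN uv by (auto simp: M_def)
    ultimately show ?thesis by (simp add: exp_add)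
  qed
  define A where "A = {a. \<exists>N\<ge>M. \<forall>r\<ge>N. a * x r \<le> x (\<tau> r)}"
  have down: "a' \<in> A" if "a \<in> A" "a' \<le> a" for a a'
  proof -
    obtain N where N: "N \<ge> M" "\<forall>r\<ge>N. a * x r \<le> x (\<tau> r)" using \<open>a \<in> A\<close> unfolding A_def by auto
    have "\<forall>r\<ge>N. a' * x r \<le> x (\<tau> r)"
    proof (intro allI impI)
      fix r assume "r \<ge> N"
      then have "x r > 0" using pos N by (simp add: M_def)
      then have "a' * x r \<le> a * x r" using that by (simp add: mult_right_mono)
      then show "a' * x r \<le> x (\<tau> r)" using N \<open>r \<ge> N\<close> by auto
    qed
    then show ?thesis using N A_def by auto
  qed
  have zero: "0 \<in> A"
  proof -
    obtain N1 where N1: "\<forall>t\<ge>N1. M \<le> \<tau> t" using tau_ev by blast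
    have "\<forall>r\<ge>max N1 M. 0 * x r \<le> x (\<tau> r)"
      using N1 pos by (auto simp: M_def less_imp_le)
    then show ?thesis unfolding A_def by (intro CollectI exI[of _ "max N1 M"]) auto
  qed
  have step: "exp (max a 0 * b) \<in> A" if aA: "a \<in> A" and b: "0 < b" "b < \<beta>" for a b
  proof -
    have a0A: "max a 0 \<in> A" using aA zero by (cases "a \<le> 0") (auto simp: max_def)
    then obtain N0 where N0: "N0 \<ge> M" "\<forall>r\<ge>N0. max a 0 * x r \<le> x (\<tau> r)" unfolding A_def by auto
    have "ereal b < Liminf at_top (\<lambda>t. ereal (integral {\<tau> t..t} p))" using beta b by simp
    then have "eventually (\<lambda>t. ereal b < ereal (integral {\<tau> t..t} p)) at_top"
      by (rule less_LiminfD)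
    then obtain Nb where Nb: "\<forall>t\<ge>Nb. b < integral {\<tau> t..t} p"
      by (auto simp: eventually_at_top_linorder)
    obtain N1 where N1: "\<forall>t\<ge>N1. N0 \<le> \<tau> t" using tau_ev by blast
    have "\<forall>t\<ge>max (max N1 Nb) M. exp (max a 0 * b) * x t \<le> x (\<tau> t)"
    proof (intro allI impI)
      fix t assume t: "t \<ge> max (max N1 Nb) M"
      have tt0: "t \<ge> t0" using t by (auto simp: M_def)
      have r: "x t * exp (max a 0 * integral {\<tau> t..t} p) \<le> x (\<tau> t)"
        by (rule ratio[OF N0(1) N0(2)]) (use N1 t tau_le[OF tt0] in auto)
      have "exp (max a 0 * b) \<le> exp (max a 0 * integral {\<tau> t..t} p)"
      proof -
        have "b \<le> integral {\<tau> t..t} p" using Nb t by (auto intro: less_imp_le)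
        then have "max a 0 * b \<le> max a 0 * integral {\<tau> t..t} p" by (rule mult_left_mono) simp
        then show ?thesis by simp
      qed
      moreover have "x t > 0" using pos t by (auto simp: M_def)
      ultimately have "exp (max a 0 * b) * x t \<le> x t * exp (max a 0 * integral {\<tau> t..t} p)"
        by (simp add: mult.commute mult_left_mono)
      then show "exp (max a 0 * b) * x t \<le> x (\<tau> t)" using r by linarith
    qed
    then show ?thesis unfolding A_def by (intro CollectI exI[of _ "max (max N1 Nb) M"]) auto
  qed
  have lamA: "lam - \<epsilon> \<in> A" if eps: "\<epsilon> > 0" for \<epsilon>
  proof (rule ccontr)
    assume nA: "lam - \<epsilon> \<notin> A"
    have bnd: "\<forall>a\<in>A. a < lam - \<epsilon>"
      using down nA by (meson not_less)
    define L where "L = Sup A"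
    have ne: "A \<noteq> {}" using zero by auto
    have bdd: "bdd_above A" using bnd by (auto intro!: bdd_aboveI[of _ "lam - \<epsilon>"] less_imp_le)
    have L0: "0 \<le> L" unfolding L_def by (rule cSup_upper[OF zero bdd])
    have Lle: "L \<le> lam - \<epsilon>" unfolding L_def
      by (rule cSup_least[OF ne]) (use bnd in \<open>auto intro: less_imp_le\<close>)
    have key: "exp (max (L - h) 0 * (\<beta> - h)) \<le> L" if h: "0 < h" "h < \<beta>" for h
    proof -
      have "L - h < Sup A" using h L_def by simp
      then obtain a where "a \<in> A" "L - h < a" using less_cSup_iff[OF ne bdd] by blast
      then have "L - h \<in> A" using down by auto
      then have "exp (max (L - h) 0 * (\<beta> - h)) \<in> A" using step h by auto
      then show ?thesis unfolding L_def by (rule cSup_upper[OF _ bdd])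
    qed
    have lim: "((\<lambda>h. exp (max (L - h) 0 * (\<beta> - h))) \<longlongrightarrow> exp (max (L - 0) 0 * (\<beta> - 0))) (at_right 0)"
      by (intro tendsto_intros)
    have ev: "eventually (\<lambda>h. exp (max (L - h) 0 * (\<beta> - h)) \<le> L) (at_right (0::real))"
    proof -
      have "eventually (\<lambda>h. 0 < h \<and> h < \<beta>) (at_right (0::real))"
        using beta_pos by (simp add: eventually_at_right_field) (metis zero_less_iff_neq_zero nless_le order_less_trans)
      then show ?thesis by eventually_elim (use key in auto)
    qed
    have "exp (max (L - 0) 0 * (\<beta> - 0)) \<le> L"
      by (rule tendsto_le[OF _ tendsto_const lim ev]) simp
    then have gL: "exp (\<beta> * L) - L \<le> 0" using L0 by (simp add: mult.commute)
    have "\<exists>l. 0 \<le> l \<and> l \<le> L \<and> exp (\<beta> * l) - l = 0"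
      by (rule IVT2'[of "\<lambda>l. exp (\<beta> * l) - l"]) (use gL L0 in \<open>auto intro!: continuous_intros\<close>)
    then obtain l where l: "l \<le> L" "exp (\<beta> * l) = l" by auto
    then have "lam \<le> l" using lam_least by auto
    then show False using l Lle eps by linarith
  qed
  define G where "G = (\<lambda>\<epsilon> t. integral {\<sigma> t..t} (\<lambda>s. p s *
                      exp (oint (\<tau> s) (\<sigma> t) (\<lambda>\<xi>. (lam - \<epsilon>) * p \<xi>))))"
  have inner: "Limsup at_top (\<lambda>t. ereal (G \<epsilon> t)) \<le> 1" if eps: "\<epsilon> > 0" for \<epsilon>
  proof -
    define c where "c = lam - \<epsilon>"
    have "c \<in> A" using lamA eps c_def by simp
    then obtain Nc where Nc: "Nc \<ge> M" "\<forall>r\<ge>Nc. c * x r \<le> x (\<tau> r)" unfolding A_def by auto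
    obtain N2 where N2: "\<forall>s\<ge>N2. Nc \<le> \<tau> s" using tau_ev by blast
    obtain N3 where N3: "\<forall>t\<ge>N3. max N2 M \<le> \<tau> t" using tau_ev by blast
    have "\<forall>t\<ge>max N3 M. ereal (G \<epsilon> t) \<le> 1"
    proof (intro allI impI)
      fix t assume t: "t \<ge> max N3 M"
      have tt0: "t \<ge> t0" using t by (auto simp: M_def)
      have taut: "max N2 M \<le> \<tau> t" using N3 t by auto
      have st: "\<tau> t \<le> \<sigma> t" "\<sigma> t \<le> t" using sigma_ge[OF tt0] sigma_le[OF tt0] by auto
      have sM: "\<sigma> t \<ge> M" using taut st by auto
      have xs: "x (\<sigma> t) > 0" "x t > 0" using pos sM t by (auto simp: M_def)
      define h where "h = (\<lambda>s. p s * exp (oint (\<tau> s) (\<sigma> t) (\<lambda>\<xi>. c * p \<xi>)))"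
      have Gh: "G \<epsilon> t = integral {\<sigma> t..t} h" unfolding G_def h_def c_def by simp
      have dx: "(x has_vector_derivative x' s) (at s within {\<sigma> t..t})" if s: "s \<in> {\<sigma> t..t}" for s
      proof -
        have "(x has_real_derivative x' s) (at s within {\<sigma> t..t})"
          by (rule DERIV_subset[OF deriv]) (use s sM in \<open>auto simp: M_def\<close>)
        then show ?thesis by (simp add: has_real_derivative_iff_has_vector_derivative)
      qed
      have E1: "(x' has_integral x t - x (\<sigma> t)) {\<sigma> t..t}"
        by (rule fundamental_theorem_of_calculus[OF st(2) dx])
      have E2: "((\<lambda>s. p s * x (\<tau> s)) has_integral x (\<sigma> t) - x t) {\<sigma> t..t}"
      proof -
        have "((\<lambda>s. - x' s) has_integral - (x t - x (\<sigma> t))) {\<sigma> t..t}"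
          by (rule has_integral_neg[OF E1])
        moreover have "\<And>s. s \<in> {\<sigma> t..t} \<Longrightarrow> - x' s = p s * x (\<tau> s)"
        proof -
          fix s assume "s \<in> {\<sigma> t..t}"
          then have "s \<ge> Ti" using sM by (auto simp: M_def)
          then show "- x' s = p s * x (\<tau> s)" using eq[of s] by linarith
        qed
        ultimately have "((\<lambda>s. p s * x (\<tau> s)) has_integral - (x t - x (\<sigma> t))) {\<sigma> t..t}"
          using has_integral_eq by (metis (no_types, lifting))
        then show ?thesis by simp
      qed
      have hle: "x (\<sigma> t) * h s \<le> p s * x (\<tau> s)" if s: "s \<in> {\<sigma> t..t}" for s
      proof -
        have sge: "s \<ge> max N2 M" using s taut st by auto
        have st0: "s \<ge> t0" using sge by (auto simp: M_def)
        have taus: "\<tau> s \<ge> Nc" using N2 sge by auto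
        have "\<tau> s \<le> \<sigma> s" using sigma_ge[OF st0] .
        also have "\<sigma> s \<le> \<sigma> t" using sigma_mono st0 tt0 s
          by (auto elim: mono_onD)
        finally have tsst: "\<tau> s \<le> \<sigma> t" .
        have oi: "oint (\<tau> s) (\<sigma> t) (\<lambda>\<xi>. c * p \<xi>) = c * integral {\<tau> s..\<sigma> t} p"
          using tsst by (simp add: oint_def)
        have r: "x (\<sigma> t) * exp (c * integral {\<tau> s..\<sigma> t} p) \<le> x (\<tau> s)"
          by (rule ratio[OF Nc(1) Nc(2) taus tsst])
        have ps: "p s \<ge> 0" using p_nonneg st0 by auto
        have "x (\<sigma> t) * h s = p s * (x (\<sigma> t) * exp (c * integral {\<tau> s..\<sigma> t} p))"
          unfolding h_def oi by simp
        also have "\<dots> \<le> p s * x (\<tau> s)" using r ps by (rule mult_left_mono)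
        finally show ?thesis .
      qed
      have "G \<epsilon> t \<le> 1"
      proof (cases "h integrable_on {\<sigma> t..t}")
        case True
        then have "(h has_integral G \<epsilon> t) {\<sigma> t..t}" using Gh by (simp add: has_integral_integral)
        then have "((\<lambda>s. x (\<sigma> t) * h s) has_integral x (\<sigma> t) * G \<epsilon> t) {\<sigma> t..t}"
          by (rule has_integral_mult_right)
        then have "x (\<sigma> t) * G \<epsilon> t \<le> x (\<sigma> t) - x t"
          by (rule has_integral_le[OF _ E2]) (rule hle)
        then have "x (\<sigma> t) * G \<epsilon> t \<le> x (\<sigma> t) * 1" using xs by linarith
        then show ?thesis using xs by (simp add: mult_le_cancel_left_pos)
      next
        case False
        then show ?thesis using Gh by (simp add: not_integrable_integral)
      qed
      then show "ereal (G \<epsilon> t) \<le> 1" by simp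
    qed
    then have "eventually (\<lambda>t. ereal (G \<epsilon> t) \<le> 1) at_top"
      unfolding eventually_at_top_linorder by blast
    then show ?thesis by (rule Limsup_bounded)
  qed
  have "eventually (\<lambda>\<epsilon>. Limsup at_top (\<lambda>t. ereal (G \<epsilon> t)) \<le> 1) (at_right (0::real))"
    using eventually_at_right_less[of "0::real"] by eventually_elim (rule inner)
  then have "Limsup (at_right 0) (\<lambda>\<epsilon>. Limsup at_top (\<lambda>t. ereal (G \<epsilon> t))) \<le> 1"
    by (rule Limsup_bounded)
  then show False using cond unfolding G_def by simp
qed


theorem corollary3p2:
  fixes p \<tau> \<sigma> :: "real \<Rightarrow> real" and t0 \<beta> lam :: real
  assumes p_cont: "continuous_on {t0..} p"
      and tau_cont: "continuous_on {t0..} \<tau>"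
      and p_nonneg: "\<And>t. t \<ge> t0 \<Longrightarrow> p t \<ge> 0"
      and tau_nonneg: "\<And>t. t \<ge> t0 \<Longrightarrow> \<tau> t \<ge> 0"
      and tau_le: "\<And>t. t \<ge> t0 \<Longrightarrow> \<tau> t \<le> t"
      and tau_lim: "filterlim \<tau> at_top at_top"
      and beta: "Liminf at_top (\<lambda>t. ereal (integral {\<tau> t..t} p)) = ereal \<beta>"
      and beta_pos: "0 < \<beta>" and beta_le: "\<beta> \<le> exp (-1)"
      and lam_root: "exp (\<beta> * lam) = lam"
      and lam_least: "\<And>l. exp (\<beta> * l) = l \<Longrightarrow> lam \<le> l"
      and sigma_cont: "continuous_on {t0..} \<sigma>"
      and sigma_mono: "mono_on {t0..} \<sigma>"
      and sigma_ge: "\<And>t. t \<ge> t0 \<Longrightarrow> \<tau> t \<le> \<sigma> t"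
      and sigma_le: "\<And>t. t \<ge> t0 \<Longrightarrow> \<sigma> t \<le> t"
      and cond: "Limsup (at_right 0) (\<lambda>\<epsilon>. Limsup at_top (\<lambda>t. ereal
                   (integral {\<sigma> t..t} (\<lambda>s. p s *
                      exp (oint (\<tau> s) (\<sigma> t) (\<lambda>\<xi>. (lam - \<epsilon>) * p \<xi>)))))) > 1"
  shows "\<forall>x. is_solution p \<tau> t0 x \<longrightarrow> oscillatory x"
proof (intro allI impI)
  fix x assume sol: "is_solution p \<tau> t0 x"
  then obtain T0 x' where T0: "t0 \<le> T0" and xc: "continuous_on {T0..} x"
    and de: "\<forall>t \<ge> tau_inv \<tau> t0 T0.
            (x has_real_derivative x' t) (at t within {tau_inv \<tau> t0 T0..}) \<and>
            x' t + p t * x (\<tau> t) = 0"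
    unfolding is_solution_def by blast
  define Ti where "Ti = tau_inv \<tau> t0 T0"
  show "oscillatory x"
  proof (rule ccontr)
    assume "\<not> oscillatory x"
    then obtain T where T: "\<forall>t\<ge>T. x t \<noteq> 0" unfolding oscillatory_def by auto
    define T' where "T' = max T T0"
    have "(\<forall>t\<ge>T'. x t > 0) \<or> (\<forall>t\<ge>T'. x t < 0)"
    proof (rule ccontr)
      assume "\<not> ?thesis"
      then obtain a b where a: "a \<ge> T'" "x a \<le> 0" and b: "b \<ge> T'" "x b \<ge> 0"
        by (auto simp: not_less)
      have a': "x a < 0" using a T by (auto simp: T'_def less_le)
      have b': "x b > 0" using b T by (auto simp: T'_def less_le)
      show False
      proof (cases "a \<le> b")
        case True
        have "\<exists>z. a \<le> z \<and> z \<le> b \<and> x z = 0"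
          by (rule IVT'[OF _ _ True continuous_on_subset[OF xc]]) (use a' b' a in \<open>auto simp: T'_def\<close>)
        then show False using T a by (auto simp: T'_def)
      next
        case False
        have "\<exists>z. b \<le> z \<and> z \<le> a \<and> x z = 0"
          by (rule IVT2'[OF _ _ _ continuous_on_subset[OF xc]]) (use a' b' b False in \<open>auto simp: T'_def\<close>)
        then show False using T b by (auto simp: T'_def)
      qed
    qed
    then show False
    proof
      assume P: "\<forall>t\<ge>T'. x t > 0"
      show False
        by (rule core[OF p_cont p_nonneg tau_le tau_lim beta beta_pos lam_least sigma_mono sigma_ge sigma_le cond,
              where x=x and x'=x' and Ti=Ti and T=T']) (use de P in \<open>auto simp: Ti_def\<close>)
    next
      assume N: "\<forall>t\<ge>T'. x t < 0"
      show False
      proof (rule core[OF p_cont p_nonneg tau_le tau_lim beta beta_pos lam_least sigma_mono sigma_ge sigma_le cond,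
              where x="\<lambda>t. - x t" and x'="\<lambda>t. - x' t" and Ti=Ti and T=T'])
        fix t assume "t \<ge> Ti"
        then have "(x has_real_derivative x' t) (at t within {Ti..})" "x' t + p t * x (\<tau> t) = 0"
          using de by (auto simp: Ti_def)
        then show "((\<lambda>t. - x t) has_real_derivative - x' t) (at t within {Ti..})"
          "- x' t + p t * - x (\<tau> t) = 0"
          by (auto intro: DERIV_minus)
      next
        fix t assume "t \<ge> T'" then show "0 < - x t" using N by auto
      qed
    qed
  qed
qed

end
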